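(* Let $\mathbb{T}$ be a time scale, $\alpha\in]0,1]$, and let $f:\mathbb{T}\to\mathbb{R}$ be both delta and nabla fractional differentiable of order $\alpha$. Then $f$ is symmetric fractional differentiable of order $\alpha$ and, for each $t\in\mathbb{T}_\kappa^\kappa$, $$f^{\diamondsuit^\alpha}(t)=\gamma_1(t)f^{\Delta^\alpha}(t)+\gamma_2(t)f^{\nabla^\alpha}(t),$$ where $$\gamma_1(t):=\lim_{s\to t}\left[\frac{\sigma(t)-s}{\sigma(t)+2t-2s-\rho(t)}\right]^\alpha,\qquad \gamma_2(t):=\lim_{s\to t}\left[\frac{(2t-s)-\rho(t)}{\sigma(t)+2t-2s-\rho(t)}\right]^\alpha.$$
   Context: A time scale $\mathbb{T}$ is a nonempty closed subset of $\mathbb{R}$. $\sigma(t)=\inf\{s\in\mathbb{T}:s>t\}$ ($\inf\emptyset=\sup\mathbb{T}$), $\rho(t)=\sup\{s\in\mathbb{T}:s<t\}$ ($\sup\emptyset=\inf\mathbb{T}$); $f^\sigma=f\circ\sigma$, $f^\rho=f\circ\rho$. $\mathbb{T}^\kappa=\mathbb{T}\setminus\{\sup\mathbb{T}\}$ if $\sup\mathbb{T}$ is finite and left-scattered, else $\mathbb{T}$; $\mathbb{T}_\kappa=\mathbb{T}\setminus\{\inf\mathbb{T}\}$ if $\inf\mathbb{T}$ is finite and right-scattered, else $\mathbb{T}$; $\mathbb{T}_\kappa^\kappa=\mathbb{T}_\kappa\cap\mathbb{T}^\kappa$. Let $A=\,]0,1]\cap\{1/q: q\text{ odd positive integer}\}$,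 with $x^{1/q}$ the real $q$-th root. Nabla fractional derivative of order $\alpha$ at $t\in\mathbb{T}_\kappa$: the number $f^{\nabla^\alpha}(t)$ (if it exists) such that for every $\varepsilon>0$ there is $\delta>0$ with $\big|[f(s)-f^\rho(t)]-f^{\nabla^\alpha}(t)[s-\rho(t)]^\alpha\big|\le\varepsilon|s-\rho(t)|^\alpha$ for all $s\in\,]t-\delta,t+\delta[\,\cap\mathbb{T}$ if $\alpha\in A$, resp. all $s\in[t,t+\delta[\,\cap\mathbb{T}$ if $\alpha\notin A$. Delta fractional derivative of order $\alpha$ at $t\in\mathbb{T}^\kappa$: the number $f^{\Delta^\alpha}(t)$ (if it exists) such that for every $\varepsilon>0$ there is $\delta>0$ with $\big|[f^\sigma(t)-f(s)]-f^{\Delta^\alpha}(t)[\sigma(t)-s]^\alpha\big|\le\varepsilon|\sigma(t)-s|^\alpha$ for all $s\in\,]t-\delta,t+\delta[\,\cap\mathbb{T}$ if $\alpha\in A$, resp. all $s\in\,]t-\delta,t]\cap\mathbb{T}$ if $\alpha\notin A$. Symmetric fractional derivative of order $\alpha$ at $t\in\mathbb{T}_\kappa^\kappa$: the number $f^{\diamondsuit^\alpha}(t)$ (if it exists) such that for every $\varepsilon>0$ there is a neighborhood $U\subset\mathbb{T}$ of $t$ with $\big|[f^\sigma(t)-f(s)+f(2t-s)-f^\rho(t)]-f^{\diamondsuit^\alpha}(t)[\sigma(t)+2t-2s-\rho(t)]^\alpha\big|\le\varepsilon|\sigma(t)+2t-2s-\rho(t)|^\alpha$ for all $s\in U$ with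 $2t-s\in U$. A function is (delta/nabla/symmetric) fractional differentiable of order $\alpha$ if the corresponding derivative exists at every point of its domain of definition ($\mathbb{T}^\kappa$, $\mathbb{T}_\kappa$, $\mathbb{T}_\kappa^\kappa$ respectively). Limits $s\to t$ are over $s\in\mathbb{T}$, $s\ne t$. *)

theory Defs
  imports "HOL-Analysis.Analysis"
begin

definition time_scale :: "real set \<Rightarrow> bool" where
  "time_scale T \<longleftrightarrow> T \<noteq> {} \<and> closed T"

definition ts_sigma :: "real set \<Rightarrow> real \<Rightarrow> real" where
  "ts_sigma T t = (if {s\<in>T. s > t} = {} then Sup T else Inf {s\<in>T. s > t})"

definition ts_rho :: "real set \<Rightarrow> real \<Rightarrow> real" where
  "ts_rho T t = (if {s\<in>T. s < t} = {} then Inf T else Sup {s\<in>T. s < t})"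

definition kappa_up :: "real set \<Rightarrow> real set" where
  "kappa_up T = (if bdd_above T \<and> ts_rho T (Sup T) < Sup T then T - {Sup T} else T)"

definition kappa_low :: "real set \<Rightarrow> real set" where
  "kappa_low T = (if bdd_below T \<and> ts_sigma T (Inf T) > Inf T then T - {Inf T} else T)"

definition kappa_both :: "real set \<Rightarrow> real set" where
  "kappa_both T = kappa_low T \<inter> kappa_up T"

definition frac_A :: "real set" where
  "frac_A = {a. 0 < a \<and> a \<le> 1 \<and> (\<exists>q::nat. odd q \<and> a = 1 / real q)}"

text \<open>x^alpha: odd (sign-preserving) extension of |x| powr alpha.  For alpha = 1/q with q odd
  this is exactly the real q-th root (lemma frpow_root below); for x \<ge> 0 it is the usual power.\<close>
definition frpow :: "real \<Rightarrow> real \<Rightarrow> real" where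
  "frpow \<alpha> x = sgn x * \<bar>x\<bar> powr \<alpha>"

lemma frpow_root:
  assumes "odd q"
  shows "frpow (1 / real q) x = root q x"
proof -
  have q: "q > 0" using assms by (cases q) auto
  consider "x > 0" | "x = 0" | "x < 0" by linarith
  then show ?thesis
  proof cases
    case 1 then show ?thesis using q by (simp add: frpow_def root_powr_inverse)
  next
    case 2 then show ?thesis by (simp add: frpow_def)
  next
    case 3
    have "root q x = - root q (-x)" using real_root_minus by simp
    also have "root q (-x) = (-x) powr (1 / real q)" using q 3 by (simp add: root_powr_inverse)
    finally show ?thesis using 3 by (simp add: frpow_def)
  qed
qed

definition has_nabla_frac_deriv ::
  "real set \<Rightarrow> real \<Rightarrow> (real \<Rightarrow> real) \<Rightarrow> real \<Rightarrow> real \<Rightarrow> bool" where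
  "has_nabla_frac_deriv T \<alpha> f t D \<longleftrightarrow>
     (\<forall>\<epsilon>>0. \<exists>\<delta>>0. \<forall>s\<in>T.
        (if \<alpha> \<in> frac_A then t - \<delta> < s \<and> s < t + \<delta> else t \<le> s \<and> s < t + \<delta>) \<longrightarrow>
        \<bar>(f s - f (ts_rho T t)) - D * frpow \<alpha> (s - ts_rho T t)\<bar>
          \<le> \<epsilon> * \<bar>s - ts_rho T t\<bar> powr \<alpha>)"

definition has_delta_frac_deriv ::
  "real set \<Rightarrow> real \<Rightarrow> (real \<Rightarrow> real) \<Rightarrow> real \<Rightarrow> real \<Rightarrow> bool" where
  "has_delta_frac_deriv T \<alpha> f t D \<longleftrightarrow>
     (\<forall>\<epsilon>>0. \<exists>\<delta>>0. \<forall>s\<in>T.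
        (if \<alpha> \<in> frac_A then t - \<delta> < s \<and> s < t + \<delta> else t - \<delta> < s \<and> s \<le> t) \<longrightarrow>
        \<bar>(f (ts_sigma T t) - f s) - D * frpow \<alpha> (ts_sigma T t - s)\<bar>
          \<le> \<epsilon> * \<bar>ts_sigma T t - s\<bar> powr \<alpha>)"

text \<open>Neighbourhood U of t in T = T \<inter> V with V open, t \<in> V.\<close>
definition has_sym_frac_deriv ::
  "real set \<Rightarrow> real \<Rightarrow> (real \<Rightarrow> real) \<Rightarrow> real \<Rightarrow> real \<Rightarrow> bool" where
  "has_sym_frac_deriv T \<alpha> f t D \<longleftrightarrow>
     (\<forall>\<epsilon>>0. \<exists>V. open V \<and> t \<in> V \<and> (\<forall>s\<in>T \<inter> V. 2 * t - s \<in> T \<inter> V \<longrightarrow>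
        \<bar>(f (ts_sigma T t) - f s + f (2 * t - s) - f (ts_rho T t))
           - D * frpow \<alpha> (ts_sigma T t + 2 * t - 2 * s - ts_rho T t)\<bar>
          \<le> \<epsilon> * \<bar>ts_sigma T t + 2 * t - 2 * s - ts_rho T t\<bar> powr \<alpha>))"

definition delta_frac_differentiable :: "real set \<Rightarrow> real \<Rightarrow> (real \<Rightarrow> real) \<Rightarrow> bool" where
  "delta_frac_differentiable T \<alpha> f \<longleftrightarrow> (\<forall>t\<in>kappa_up T. \<exists>D. has_delta_frac_deriv T \<alpha> f t D)"

definition nabla_frac_differentiable :: "real set \<Rightarrow> real \<Rightarrow> (real \<Rightarrow> real) \<Rightarrow> bool" where
  "nabla_frac_differentiable T \<alpha> f \<longleftrightarrow> (\<forall>t\<in>kappa_low T. \<exists>D. has_nabla_frac_deriv T \<alpha> f t D)"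

definition sym_frac_differentiable :: "real set \<Rightarrow> real \<Rightarrow> (real \<Rightarrow> real) \<Rightarrow> bool" where
  "sym_frac_differentiable T \<alpha> f \<longleftrightarrow> (\<forall>t\<in>kappa_both T. \<exists>D. has_sym_frac_deriv T \<alpha> f t D)"

text \<open>Limit s \<rightarrow> t over s \<in> T, s \<noteq> t.  If t is an isolated point of T this limit is vacuous;
  there we use the value of the expression at s = t.\<close>
definition ts_lim :: "real set \<Rightarrow> (real \<Rightarrow> real) \<Rightarrow> real \<Rightarrow> real" where
  "ts_lim T g t = (if t islimpt T then Lim (at t within T) g else g t)"

definition gamma1 :: "real set \<Rightarrow> real \<Rightarrow> real \<Rightarrow> real" where
  "gamma1 T \<alpha> t = ts_lim T (\<lambda>s. frpow \<alpha>
     ((ts_sigma T t - s) / (ts_sigma T t + 2 * t - 2 * s - ts_rho T t))) t"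

definition gamma2 :: "real set \<Rightarrow> real \<Rightarrow> real \<Rightarrow> real" where
  "gamma2 T \<alpha> t = ts_lim T (\<lambda>s. frpow \<alpha>
     (((2 * t - s) - ts_rho T t) / (ts_sigma T t + 2 * t - 2 * s - ts_rho T t))) t"

end

theory Submission
  imports Defs
begin

lemma frpow_nonneg: "x \<ge> 0 \<Longrightarrow> frpow a x = x powr a"
  by (cases "x = 0") (auto simp: frpow_def)

lemma frpow_minus: "frpow a (- x) = - frpow a x"
  by (simp add: frpow_def sgn_minus)

lemma frpow_tendsto0:
  assumes "(g \<longlongrightarrow> 0) F" "a > 0"
  shows "((\<lambda>x. frpow a (g x)) \<longlongrightarrow> 0) F"
proof -
  have "((\<lambda>x. \<bar>g x\<bar> powr a) \<longlongrightarrow> 0) F"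
  proof (rule tendsto_zero_powrI[OF _ tendsto_const])
    show "((\<lambda>x. \<bar>g x\<bar>) \<longlongrightarrow> 0) F" using tendsto_rabs_zero[OF assms(1)] .
    show "\<forall>\<^sub>F x in F. 0 \<le> \<bar>g x\<bar>" by simp
    show "0 < a" by (rule assms(2))
  qed
  moreover have "\<bar>frpow a (g x)\<bar> = \<bar>g x\<bar> powr a" for x
    by (auto simp: frpow_def abs_mult sgn_if)
  ultimately have "((\<lambda>x. \<bar>frpow a (g x)\<bar>) \<longlongrightarrow> 0) F" by simp
  then show ?thesis by (rule tendsto_rabs_zero_cancel)
qed

lemma frpow_tendsto_pos:
  assumes "(g \<longlongrightarrow> c) F" "c > 0"
  shows "((\<lambda>x. frpow a (g x)) \<longlongrightarrow> c powr a) F"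
proof -
  have ev: "eventually (\<lambda>x. g x > 0) F"
    using order_tendstoD(1)[OF assms(1) assms(2)] .
  have "((\<lambda>x. g x powr a) \<longlongrightarrow> c powr a) F"
    using assms by (intro tendsto_intros) auto
  then show ?thesis
    by (rule Lim_transform_eventually) (use ev in \<open>auto elim: eventually_mono simp: frpow_nonneg\<close>)
qed

lemma zero_if_small:
  fixes x c :: real
  assumes "c \<ge> 0" "\<And>e. e > 0 \<Longrightarrow> \<bar>x\<bar> \<le> e * c"
  shows "x = 0"
proof (rule ccontr)
  assume "x \<noteq> 0"
  have d: "2 * c + 1 > 0" using assms(1) by linarith
  have pos: "\<bar>x\<bar> / (2 * c + 1) > 0" using \<open>x \<noteq> 0\<close> d by (intro divide_pos_pos) auto
  have "\<bar>x\<bar> \<le> (\<bar>x\<bar> / (2 * c + 1)) * c" using assms(2)[OF pos] .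
  moreover have "(\<bar>x\<bar> / (2 * c + 1)) * c < (\<bar>x\<bar> / (2 * c + 1)) * (2 * c + 1)"
    using pos assms(1) by (intro mult_strict_left_mono) auto
  moreover have "(\<bar>x\<bar> / (2 * c + 1)) * (2 * c + 1) = \<bar>x\<bar>" using d by simp
  ultimately show False by linarith
qed

lemma sigma_props:
  assumes "t \<in> T"
  shows "t \<le> ts_sigma T t" "\<And>s. s \<in> T \<Longrightarrow> t < s \<Longrightarrow> ts_sigma T t \<le> s"
proof -
  show "t \<le> ts_sigma T t"
  proof (cases "{s\<in>T. s > t} = {}")
    case True
    then have "\<forall>s\<in>T. s \<le> t" by force
    then have "Sup T = t" using assms by (intro cSup_eq_maximum) auto
    then show ?thesis using True by (simp add: ts_sigma_def)
  next
    case False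
    then show ?thesis unfolding ts_sigma_def
      by (auto intro!: cInf_greatest)
  qed
  fix s assume "s \<in> T" "t < s"
  then have ne: "{s\<in>T. s > t} \<noteq> {}" by auto
  show "ts_sigma T t \<le> s" unfolding ts_sigma_def using ne \<open>s \<in> T\<close> \<open>t < s\<close>
    by (auto intro!: cInf_lower bdd_belowI[where m=t])
qed

lemma rho_props:
  assumes "t \<in> T"
  shows "ts_rho T t \<le> t" "\<And>s. s \<in> T \<Longrightarrow> s < t \<Longrightarrow> s \<le> ts_rho T t"
proof -
  show "ts_rho T t \<le> t"
  proof (cases "{s\<in>T. s < t} = {}")
    case True
    then have "\<forall>s\<in>T. t \<le> s" by force
    then have "Inf T = t" using assms by (intro cInf_eq_minimum) auto
    then show ?thesis using True by (simp add: ts_rho_def)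
  next
    case False
    then show ?thesis unfolding ts_rho_def
      by (auto intro!: cSup_least)
  qed
  fix s assume "s \<in> T" "s < t"
  then have ne: "{s\<in>T. s < t} \<noteq> {}" by auto
  show "s \<le> ts_rho T t" unfolding ts_rho_def using ne \<open>s \<in> T\<close> \<open>s < t\<close>
    by (auto intro!: cSup_upper bdd_aboveI[where M=t])
qed


lemma frpow_tendsto_nonneg:
  assumes "(g \<longlongrightarrow> c) F" "c \<ge> 0" "a > 0"
  shows "((\<lambda>x. frpow a (g x)) \<longlongrightarrow> frpow a c) F"
proof (cases "c = 0")
  case True
  then show ?thesis using frpow_tendsto0[OF _ assms(3)] assms(1) by (simp add: frpow_def)
next
  case False
  then show ?thesis using frpow_tendsto_pos[OF assms(1)] assms(2) by (simp add: frpow_nonneg)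
qed

lemma ts_lim_cont:
  assumes "(g \<longlongrightarrow> g t) (at t within T)"
  shows "ts_lim T g t = g t"
  using assms unfolding ts_lim_def
  by (auto intro!: tendsto_Lim simp: trivial_limit_within)

lemma ts_lim_const:
  assumes "t islimpt T" "\<And>s. s \<noteq> t \<Longrightarrow> g s = c"
  shows "ts_lim T g t = c"
proof -
  have "(g \<longlongrightarrow> c) (at t within T)"
  proof (rule Lim_transform_eventually[OF tendsto_const])
    show "\<forall>\<^sub>F x in at t within T. c = g x"
      unfolding eventually_at_filter using assms(2) by (auto intro!: always_eventually)
  qed
  then show ?thesis using assms(1) unfolding ts_lim_def
    by (auto intro!: tendsto_Lim simp: trivial_limit_within)
qed

lemma main_sym:
  fixes T :: "real set" and \<alpha> :: real and f :: "real \<Rightarrow> real"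
  assumes tT: "t \<in> T" and a: "0 < \<alpha>"
    and dd: "has_delta_frac_deriv T \<alpha> f t Dd" and nn: "has_nabla_frac_deriv T \<alpha> f t Dn"
  shows "has_sym_frac_deriv T \<alpha> f t (gamma1 T \<alpha> t * Dd + gamma2 T \<alpha> t * Dn)"
proof -
  define \<sigma> where "\<sigma> = ts_sigma T t"
  define \<rho> where "\<rho> = ts_rho T t"
  define D where "D = gamma1 T \<alpha> t * Dd + gamma2 T \<alpha> t * Dn"
  have s1: "t \<le> \<sigma>" and s2: "\<And>s. s \<in> T \<Longrightarrow> t < s \<Longrightarrow> \<sigma> \<le> s"
    using sigma_props[OF tT] by (auto simp: \<sigma>_def)
  have r1: "\<rho> \<le> t" and r2: "\<And>s. s \<in> T \<Longrightarrow> s < t \<Longrightarrow> s \<le> \<rho>"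
    using rho_props[OF tT] by (auto simp: \<rho>_def)
  have g1: "gamma1 T \<alpha> t = ts_lim T (\<lambda>s. frpow \<alpha> ((\<sigma> - s) / (\<sigma> + 2 * t - 2 * s - \<rho>))) t"
    by (simp add: gamma1_def \<sigma>_def \<rho>_def)
  have g2: "gamma2 T \<alpha> t = ts_lim T (\<lambda>s. frpow \<alpha> (((2 * t - s) - \<rho>) / (\<sigma> + 2 * t - 2 * s - \<rho>))) t"
    by (simp add: gamma2_def \<sigma>_def \<rho>_def)
  have dd': "\<exists>\<delta>>0. \<forall>s\<in>T. (if \<alpha> \<in> frac_A then t - \<delta> < s \<and> s < t + \<delta> else t - \<delta> < s \<and> s \<le> t) \<longrightarrow>
        \<bar>(f \<sigma> - f s) - Dd * frpow \<alpha> (\<sigma> - s)\<bar> \<le> e * \<bar>\<sigma> - s\<bar> powr \<alpha>" if "e > 0" for e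
    unfolding \<sigma>_def using dd[unfolded has_delta_frac_deriv_def, rule_format, OF that] .
  have nn': "\<exists>\<delta>>0. \<forall>s\<in>T. (if \<alpha> \<in> frac_A then t - \<delta> < s \<and> s < t + \<delta> else t \<le> s \<and> s < t + \<delta>) \<longrightarrow>
        \<bar>(f s - f \<rho>) - Dn * frpow \<alpha> (s - \<rho>)\<bar> \<le> e * \<bar>s - \<rho>\<bar> powr \<alpha>" if "e > 0" for e
    unfolding \<rho>_def using nn[unfolded has_nabla_frac_deriv_def, rule_format, OF that] .
  have E1: "f \<sigma> - f t = Dd * frpow \<alpha> (\<sigma> - t)"
  proof -
    have "\<bar>(f \<sigma> - f t) - Dd * frpow \<alpha> (\<sigma> - t)\<bar> \<le> e * \<bar>\<sigma> - t\<bar> powr \<alpha>" if ep: "e > 0" for e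
    proof -
      obtain \<delta> where "\<delta> > 0" and H: "\<forall>s\<in>T. (if \<alpha> \<in> frac_A then t - \<delta> < s \<and> s < t + \<delta> else t - \<delta> < s \<and> s \<le> t) \<longrightarrow>
        \<bar>(f \<sigma> - f s) - Dd * frpow \<alpha> (\<sigma> - s)\<bar> \<le> e * \<bar>\<sigma> - s\<bar> powr \<alpha>"
        using dd'[OF ep] by blast
      have c: "if \<alpha> \<in> frac_A then t - \<delta> < t \<and> t < t + \<delta> else t - \<delta> < t \<and> t \<le> t"
        using \<open>\<delta> > 0\<close> by simp
      show ?thesis using H[rule_format, OF tT c] .
    qed
    then have "(f \<sigma> - f t) - Dd * frpow \<alpha> (\<sigma> - t) = 0"
      by (intro zero_if_small[of "\<bar>\<sigma> - t\<bar> powr \<alpha>"]) auto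
    then show ?thesis by simp
  qed
  have E2: "f t - f \<rho> = Dn * frpow \<alpha> (t - \<rho>)"
  proof -
    have "\<bar>(f t - f \<rho>) - Dn * frpow \<alpha> (t - \<rho>)\<bar> \<le> e * \<bar>t - \<rho>\<bar> powr \<alpha>" if ep: "e > 0" for e
    proof -
      obtain \<delta> where "\<delta> > 0" and H: "\<forall>s\<in>T. (if \<alpha> \<in> frac_A then t - \<delta> < s \<and> s < t + \<delta> else t \<le> s \<and> s < t + \<delta>) \<longrightarrow>
        \<bar>(f s - f \<rho>) - Dn * frpow \<alpha> (s - \<rho>)\<bar> \<le> e * \<bar>s - \<rho>\<bar> powr \<alpha>"
        using nn'[OF ep] by blast
      have c: "if \<alpha> \<in> frac_A then t - \<delta> < t \<and> t < t + \<delta> else t \<le> t \<and> t < t + \<delta>"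
        using \<open>\<delta> > 0\<close> by simp
      show ?thesis using H[rule_format, OF tT c] .
    qed
    then have "(f t - f \<rho>) - Dn * frpow \<alpha> (t - \<rho>) = 0"
      by (intro zero_if_small[of "\<bar>t - \<rho>\<bar> powr \<alpha>"]) auto
    then show ?thesis by simp
  qed
  show ?thesis
  proof (cases "\<sigma> > t \<or> \<rho> < t")
    case A: True
    have sr: "\<sigma> - \<rho> > 0" using A s1 r1 by linarith
    have "((\<lambda>s. (\<sigma> - s) / (\<sigma> + 2 * t - 2 * s - \<rho>)) \<longlongrightarrow> (\<sigma> - t) / (\<sigma> + 2 * t - 2 * t - \<rho>)) (at t within T)"
      using sr by (intro tendsto_intros) auto
    then have "((\<lambda>s. frpow \<alpha> ((\<sigma> - s) / (\<sigma> + 2 * t - 2 * s - \<rho>))) \<longlongrightarrow> frpow \<alpha> ((\<sigma> - t) / (\<sigma> + 2 * t - 2 * t - \<rho>))) (at t within T)"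
      using sr s1 a by (intro frpow_tendsto_nonneg) auto
    then have G1: "gamma1 T \<alpha> t = ((\<sigma> - t) / (\<sigma> - \<rho>)) powr \<alpha>"
      unfolding g1 using sr s1 by (subst ts_lim_cont) (auto simp: frpow_nonneg)
    have "((\<lambda>s. ((2 * t - s) - \<rho>) / (\<sigma> + 2 * t - 2 * s - \<rho>)) \<longlongrightarrow> ((2 * t - t) - \<rho>) / (\<sigma> + 2 * t - 2 * t - \<rho>)) (at t within T)"
      using sr by (intro tendsto_intros) auto
    then have "((\<lambda>s. frpow \<alpha> (((2 * t - s) - \<rho>) / (\<sigma> + 2 * t - 2 * s - \<rho>))) \<longlongrightarrow> frpow \<alpha> (((2 * t - t) - \<rho>) / (\<sigma> + 2 * t - 2 * t - \<rho>))) (at t within T)"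
      using sr r1 a by (intro frpow_tendsto_nonneg) auto
    then have G2: "gamma2 T \<alpha> t = ((t - \<rho>) / (\<sigma> - \<rho>)) powr \<alpha>"
      unfolding g2 using sr r1 by (subst ts_lim_cont) (auto simp: frpow_nonneg)
    have K: "D * frpow \<alpha> (\<sigma> - \<rho>) = f \<sigma> - f \<rho>"
    proof -
      have p: "(\<sigma> - \<rho>) powr \<alpha> > 0" using sr by simp
      have "D * frpow \<alpha> (\<sigma> - \<rho>) = Dd * (\<sigma> - t) powr \<alpha> + Dn * (t - \<rho>) powr \<alpha>"
        unfolding D_def G1 G2 using sr s1 r1 p
        by (simp add: frpow_nonneg powr_divide field_simps)
      also have "\<dots> = f \<sigma> - f \<rho>" using E1 E2 s1 r1 by (simp add: frpow_nonneg)
      finally show ?thesis .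
    qed
    define r where "r = (if \<sigma> > t \<and> \<rho> < t then min (\<sigma> - t) (t - \<rho>) else if \<sigma> > t then \<sigma> - t else t - \<rho>)"
    have rpos: "r > 0" using A s1 r1 unfolding r_def by auto
    have rle1: "\<sigma> > t \<Longrightarrow> r \<le> \<sigma> - t" and rle2: "\<rho> < t \<Longrightarrow> r \<le> t - \<rho>"
      unfolding r_def by auto
    have only: "s = t" if "s \<in> T" "2 * t - s \<in> T" "\<bar>s - t\<bar> < r" for s
    proof (rule ccontr)
      assume "s \<noteq> t"
      then consider "s > t" | "s < t" by linarith
      then show False
      proof cases
        case 1
        have "\<sigma> \<le> s" using s2[OF that(1) 1] .
        moreover have "2 * t - s \<le> \<rho>" using r2[OF that(2)] 1 by linarith
        moreover have "s - t < r" using that(3) 1 by simp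
        ultimately show False using A rle1 rle2 1 by (cases "\<sigma> > t") linarith+
      next
        case 2
        have "s \<le> \<rho>" using r2[OF that(1) 2] .
        moreover have "\<sigma> \<le> 2 * t - s" using s2[OF that(2)] 2 by linarith
        moreover have "t - s < r" using that(3) 2 by simp
        ultimately show False using A rle1 rle2 2 by (cases "\<sigma> > t") linarith+
      qed
    qed
    show ?thesis
      unfolding has_sym_frac_deriv_def \<sigma>_def[symmetric] \<rho>_def[symmetric] D_def[symmetric]
    proof (intro allI impI)
      fix e :: real assume "e > 0"
      show "\<exists>V. open V \<and> t \<in> V \<and> (\<forall>s\<in>T \<inter> V. 2 * t - s \<in> T \<inter> V \<longrightarrow>
        \<bar>(f \<sigma> - f s + f (2 * t - s) - f \<rho>) - D * frpow \<alpha> (\<sigma> + 2 * t - 2 * s - \<rho>)\<bar>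
          \<le> e * \<bar>\<sigma> + 2 * t - 2 * s - \<rho>\<bar> powr \<alpha>)"
      proof (intro exI[of _ "ball t r"] conjI ballI impI)
        show "open (ball t r)" by simp
        show "t \<in> ball t r" using rpos by simp
        fix s assume s: "s \<in> T \<inter> ball t r" "2 * t - s \<in> T \<inter> ball t r"
        then have "s = t" using only[of s] by (auto simp: dist_real_def abs_minus_commute)
        then show "\<bar>(f \<sigma> - f s + f (2 * t - s) - f \<rho>) - D * frpow \<alpha> (\<sigma> + 2 * t - 2 * s - \<rho>)\<bar>
          \<le> e * \<bar>\<sigma> + 2 * t - 2 * s - \<rho>\<bar> powr \<alpha>"
          using K \<open>e > 0\<close> by simp
      qed
    qed
  next
    case False
    then have st: "\<sigma> = t" and rt: "\<rho> = t" using s1 r1 by auto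
    show ?thesis
    proof (cases "t islimpt T")
      case False
      then obtain r where rpos: "r > 0" and rr: "\<And>x. x \<in> T \<Longrightarrow> x \<noteq> t \<Longrightarrow> dist x t \<ge> r"
        unfolding islimpt_approachable by (auto simp: not_less)
      show ?thesis
        unfolding has_sym_frac_deriv_def \<sigma>_def[symmetric] \<rho>_def[symmetric] D_def[symmetric]
      proof (intro allI impI exI[of _ "ball t r"] conjI ballI)
        show "open (ball t r)" by simp
        show "t \<in> ball t r" using rpos by simp
        fix e :: real and s assume "e > 0" and s: "s \<in> T \<inter> ball t r" "2 * t - s \<in> T \<inter> ball t r"
        then have "s = t" using rr[of s] by (auto simp: dist_commute)
        then show "\<bar>(f \<sigma> - f s + f (2 * t - s) - f \<rho>) - D * frpow \<alpha> (\<sigma> + 2 * t - 2 * s - \<rho>)\<bar>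
          \<le> e * \<bar>\<sigma> + 2 * t - 2 * s - \<rho>\<bar> powr \<alpha>"
          using st rt by (simp add: frpow_def)
      qed
    next
      case True
      have G1: "gamma1 T \<alpha> t = (1/2) powr \<alpha>"
        unfolding g1 st rt
      proof (rule ts_lim_const[OF True])
        fix s :: real assume "s \<noteq> t"
        then have hh: "(t - s) / (t + 2 * t - 2 * s - t) = 1/2" by (simp add: field_simps)
        then show "frpow \<alpha> ((t - s) / (t + 2 * t - 2 * s - t)) = (1/2) powr \<alpha>"
          unfolding hh by (simp add: frpow_nonneg)
      qed
      have G2: "gamma2 T \<alpha> t = (1/2) powr \<alpha>"
        unfolding g2 st rt
      proof (rule ts_lim_const[OF True])
        fix s :: real assume "s \<noteq> t"
        then have hh: "((2 * t - s) - t) / (t + 2 * t - 2 * s - t) = 1/2" by (simp add: field_simps)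
        then show "frpow \<alpha> (((2 * t - s) - t) / (t + 2 * t - 2 * s - t)) = (1/2) powr \<alpha>"
          unfolding hh by (simp add: frpow_nonneg)
      qed
      have D: "D = (1/2) powr \<alpha> * (Dd + Dn)" unfolding D_def G1 G2 by (simp add: algebra_simps)
      have two: "(2::real) powr \<alpha> \<ge> 1" using a by (intro ge_one_powr_ge_zero) auto
      show ?thesis
        unfolding has_sym_frac_deriv_def \<sigma>_def[symmetric] \<rho>_def[symmetric] D_def[symmetric] st rt
      proof (intro allI impI)
        fix e :: real assume e: "e > 0"
        obtain \<delta>1 where d1: "\<delta>1 > 0" and H1: "\<forall>s\<in>T. (if \<alpha> \<in> frac_A then t - \<delta>1 < s \<and> s < t + \<delta>1 else t - \<delta>1 < s \<and> s \<le> t) \<longrightarrow>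
          \<bar>(f t - f s) - Dd * frpow \<alpha> (t - s)\<bar> \<le> (e/2) * \<bar>t - s\<bar> powr \<alpha>"
          using dd'[of "e/2"] e st by auto
        obtain \<delta>2 where d2: "\<delta>2 > 0" and H2: "\<forall>s\<in>T. (if \<alpha> \<in> frac_A then t - \<delta>2 < s \<and> s < t + \<delta>2 else t \<le> s \<and> s < t + \<delta>2) \<longrightarrow>
          \<bar>(f s - f t) - Dn * frpow \<alpha> (s - t)\<bar> \<le> (e/2) * \<bar>s - t\<bar> powr \<alpha>"
          using nn'[of "e/2"] e rt by auto
        define d where "d = min \<delta>1 \<delta>2"
        have key: "\<bar>(f t - f u + f (2 * t - u) - f t) - D * frpow \<alpha> (t + 2 * t - 2 * u - t)\<bar>
            \<le> e * \<bar>t + 2 * t - 2 * u - t\<bar> powr \<alpha>"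
          if u: "u \<in> T" "2 * t - u \<in> T" "u \<le> t" "t - u < d" for u
        proof -
          have h1: "\<bar>(f t - f u) - Dd * frpow \<alpha> (t - u)\<bar> \<le> (e/2) * \<bar>t - u\<bar> powr \<alpha>"
          proof -
            have "if \<alpha> \<in> frac_A then t - \<delta>1 < u \<and> u < t + \<delta>1 else t - \<delta>1 < u \<and> u \<le> t"
              using u d1 unfolding d_def by auto
            then show ?thesis using H1 u(1) by blast
          qed
          have h2: "\<bar>(f (2 * t - u) - f t) - Dn * frpow \<alpha> (2 * t - u - t)\<bar> \<le> (e/2) * \<bar>2 * t - u - t\<bar> powr \<alpha>"
          proof -
            have "if \<alpha> \<in> frac_A then t - \<delta>2 < 2 * t - u \<and> 2 * t - u < t + \<delta>2 else t \<le> 2 * t - u \<and> 2 * t - u < t + \<delta>2"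
              using u d2 unfolding d_def by auto
            then show ?thesis using H2 u(2) by blast
          qed
          have eq1: "2 * t - u - t = t - u" by simp
          have eq2: "t + 2 * t - 2 * u - t = 2 * (t - u)" by simp
          have fr: "frpow \<alpha> (2 * (t - u)) = 2 powr \<alpha> * (t - u) powr \<alpha>"
          proof -
            have "frpow \<alpha> (2 * (t - u)) = (2 * (t - u)) powr \<alpha>" using u by (intro frpow_nonneg) auto
            also have "\<dots> = 2 powr \<alpha> * (t - u) powr \<alpha>" by (rule powr_mult)
            finally show ?thesis .
          qed
          have hp: "(1/2) powr \<alpha> * 2 powr \<alpha> = (1::real)"
            by (simp add: powr_mult[symmetric])
          have DD: "D * frpow \<alpha> (2 * (t - u)) = (Dd + Dn) * (t - u) powr \<alpha>"
          proof -
            have "D * frpow \<alpha> (2 * (t - u)) = ((1/2) powr \<alpha> * 2 powr \<alpha>) * ((Dd + Dn) * (t - u) powr \<alpha>)"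
              unfolding D fr by (simp only: mult_ac)
            then show ?thesis unfolding hp by simp
          qed
          have "\<bar>(f t - f u + f (2 * t - u) - f t) - D * frpow \<alpha> (t + 2 * t - 2 * u - t)\<bar>
              \<le> \<bar>(f t - f u) - Dd * frpow \<alpha> (t - u)\<bar> + \<bar>(f (2 * t - u) - f t) - Dn * frpow \<alpha> (2 * t - u - t)\<bar>"
          proof -
            have fu: "frpow \<alpha> (t - u) = (t - u) powr \<alpha>" using u by (intro frpow_nonneg) auto
            have "(f t - f u + f (2 * t - u) - f t) - (Dd + Dn) * (t - u) powr \<alpha>
               = ((f t - f u) - Dd * frpow \<alpha> (t - u)) + ((f (2 * t - u) - f t) - Dn * frpow \<alpha> (t - u))"
              unfolding fu by (simp add: algebra_simps)
            then show ?thesis unfolding eq2 DD eq1 by (metis abs_triangle_ineq)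
          qed
          also have "\<dots> \<le> e * \<bar>t - u\<bar> powr \<alpha>" using h1 h2 eq1 by simp
          also have "\<dots> \<le> e * (2 powr \<alpha> * \<bar>t - u\<bar> powr \<alpha>)"
          proof -
            have "1 * \<bar>t - u\<bar> powr \<alpha> \<le> 2 powr \<alpha> * \<bar>t - u\<bar> powr \<alpha>"
              by (rule mult_right_mono[OF two]) simp
            then show ?thesis using e by (intro mult_left_mono) auto
          qed
          also have "\<dots> = e * \<bar>t + 2 * t - 2 * u - t\<bar> powr \<alpha>"
            unfolding eq2 abs_mult powr_mult by simp
          finally show ?thesis .
        qed
        show "\<exists>V. open V \<and> t \<in> V \<and> (\<forall>s\<in>T \<inter> V. 2 * t - s \<in> T \<inter> V \<longrightarrow>
          \<bar>(f t - f s + f (2 * t - s) - f t) - D * frpow \<alpha> (t + 2 * t - 2 * s - t)\<bar>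
            \<le> e * \<bar>t + 2 * t - 2 * s - t\<bar> powr \<alpha>)"
        proof (intro exI[of _ "ball t d"] conjI ballI impI)
          show "open (ball t d)" by simp
          show "t \<in> ball t d" using d1 d2 by (simp add: d_def)
          fix s assume s: "s \<in> T \<inter> ball t d" "2 * t - s \<in> T \<inter> ball t d"
          show "\<bar>(f t - f s + f (2 * t - s) - f t) - D * frpow \<alpha> (t + 2 * t - 2 * s - t)\<bar>
            \<le> e * \<bar>t + 2 * t - 2 * s - t\<bar> powr \<alpha>"
          proof (cases "s \<le> t")
            case True
            then show ?thesis using key[of s] s by (auto simp: dist_real_def)
          next
            case False
            have k: "\<bar>(f t - f (2 * t - s) + f (2 * t - (2 * t - s)) - f t) - D * frpow \<alpha> (t + 2 * t - 2 * (2 * t - s) - t)\<bar>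
              \<le> e * \<bar>t + 2 * t - 2 * (2 * t - s) - t\<bar> powr \<alpha>"
              using key[of "2 * t - s"] s False by (auto simp: dist_real_def)
            have e1: "t + 2 * t - 2 * (2 * t - s) - t = - (t + 2 * t - 2 * s - t)" by simp
            have e2: "2 * t - (2 * t - s) = s" by simp
            have "\<bar>(f t - f s + f (2 * t - s) - f t) - D * frpow \<alpha> (t + 2 * t - 2 * s - t)\<bar>
               = \<bar>(f t - f (2 * t - s) + f (2 * t - (2 * t - s)) - f t) - D * frpow \<alpha> (t + 2 * t - 2 * (2 * t - s) - t)\<bar>"
              unfolding e1 e2 frpow_minus by simp
            also have "\<dots> \<le> e * \<bar>t + 2 * t - 2 * (2 * t - s) - t\<bar> powr \<alpha>" by (rule k)
            also have "\<dots> = e * \<bar>t + 2 * t - 2 * s - t\<bar> powr \<alpha>" by (simp only: e1 abs_minus_cancel)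
            finally show ?thesis .
          qed
        qed
      qed
    qed
  qed
qed

theorem proposition3p29:
  fixes T :: "real set" and \<alpha> :: real and f :: "real \<Rightarrow> real"
  assumes "time_scale T"
    and "0 < \<alpha>" and "\<alpha> \<le> 1"
    and "delta_frac_differentiable T \<alpha> f"
    and "nabla_frac_differentiable T \<alpha> f"
  shows "sym_frac_differentiable T \<alpha> f \<and>
    (\<forall>t\<in>kappa_both T. \<forall>Ddelta Dnabla.
        has_delta_frac_deriv T \<alpha> f t Ddelta \<and> has_nabla_frac_deriv T \<alpha> f t Dnabla \<longrightarrow>
        has_sym_frac_deriv T \<alpha> f t (gamma1 T \<alpha> t * Ddelta + gamma2 T \<alpha> t * Dnabla))"
proof -
  have kT: "kappa_both T \<subseteq> T" unfolding kappa_both_def kappa_low_def kappa_up_def by auto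
  have 2: "\<forall>t\<in>kappa_both T. \<forall>Ddelta Dnabla.
        has_delta_frac_deriv T \<alpha> f t Ddelta \<and> has_nabla_frac_deriv T \<alpha> f t Dnabla \<longrightarrow>
        has_sym_frac_deriv T \<alpha> f t (gamma1 T \<alpha> t * Ddelta + gamma2 T \<alpha> t * Dnabla)"
  proof (intro ballI allI impI)
    fix t Ddelta Dnabla assume t: "t \<in> kappa_both T"
      and h: "has_delta_frac_deriv T \<alpha> f t Ddelta \<and> has_nabla_frac_deriv T \<alpha> f t Dnabla"
    have "t \<in> T" using t kT by blast
    then show "has_sym_frac_deriv T \<alpha> f t (gamma1 T \<alpha> t * Ddelta + gamma2 T \<alpha> t * Dnabla)"
      using main_sym[OF _ assms(2), of t T f Ddelta Dnabla] h by simp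
  qed
  have "sym_frac_differentiable T \<alpha> f"
    unfolding sym_frac_differentiable_def
  proof
    fix t assume t: "t \<in> kappa_both T"
    then obtain Dd Dn where "has_delta_frac_deriv T \<alpha> f t Dd" "has_nabla_frac_deriv T \<alpha> f t Dn"
      using assms(4,5) unfolding delta_frac_differentiable_def nabla_frac_differentiable_def kappa_both_def
      by (meson IntD1 IntD2)
    then show "\<exists>D. has_sym_frac_deriv T \<alpha> f t D" using 2 t by (intro exI) auto
  qed
  then show ?thesis using 2 by (rule conjI)
qed

end
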